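(* Let $n\ge2$, $Q>0$ real, and let $P\in\mathrm{Mat}(n^2,\mathbb{C})$ be a nontrivial solution of rank $r$ to $$P^*=P,\quad P^2=P,\quad Q^2(P_1P_2P_1-P_2P_1P_2)=P_1-P_2,$$ where $P_1=P\otimes I_n$, $P_2=I_n\otimes P$. Let $k=\tfrac12\operatorname{rank}(P_1-P_2)$. (a) $\operatorname{rank}(Q^2P_1P_2P_1-P_1)=\operatorname{rank}(Q^2P_2P_1P_2-P_2)=rn-k$. (b) $P$ satisfies $Q^2P_1P_2P_1=P_1$ and $Q^2P_2P_1P_2=P_2$ (i.e. $P$ is of Temperley–Lieb type) if and only if $k=rn$.
   Context: $I_n$ is the $n\times n$ identity matrix and $\otimes$ is the Kronecker product. A solution is trivial if $P=0$ or $P=I_n\otimes I_n$, nontrivial otherwise. *)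

theory Defs
  imports "HOL-Analysis.Analysis"
begin

definition kron :: "'a::times^'n^'n \<Rightarrow> 'a^'m^'m \<Rightarrow> 'a^('n \<times> 'm)^('n \<times> 'm)" where
  "kron A B = (\<chi> p q. A $ fst p $ fst q * B $ snd p $ snd q)"

definition adjoint_mat :: "complex^'n^'m \<Rightarrow> complex^'m^'n" where
  "adjoint_mat A = (\<chi> i j. cnj (A $ j $ i))"

text \<open>Canonical identification of index sets n \<times> (n \<times> n) \<cong> (n \<times> n) \<times> n
  (associativity of the tensor product), used to compare I\<otimes>P with P\<otimes>I.\<close>
definition reassoc :: "'a^('x::finite \<times> ('y::finite \<times> 'z::finite))^('x \<times> ('y \<times> 'z)) \<Rightarrow> 'a^(('x \<times> 'y) \<times> 'z)^(('x \<times> 'y) \<times> 'z)" where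
  "reassoc M = (\<chi> p q. M $ (fst (fst p), snd (fst p), snd p) $ (fst (fst q), snd (fst q), snd q))"

end

theory Submission
  imports Defs
begin

lemma row_vmul: "row i A v* B = row i (A ** B)"
  by (simp add: row_def vector_matrix_mult_def matrix_matrix_mult_def)

lemma vmul_rows: "(v::'a::field^'m) v* M = (\<Sum>i\<in>UNIV. v$i *s row i M)"
  by (simp add: vec_eq_iff vector_matrix_mult_def row_def sum_component)

lemma rank_idem_trace:
  fixes E :: "'a::field^'n^'n"
  assumes idem: "E ** E = E"
  shows "of_nat (rank E) = trace E"
proof -
  obtain Bs where Bs: "Bs \<subseteq> rows E" "vec.independent Bs" "rows E \<subseteq> vec.span Bs"
      "card Bs = vec.dim (rows E)"
    using vec.basis_exists by blast
  have fin: "finite Bs" using Bs(2) vec.finiteI_independent by blast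
  have "\<forall>i. \<exists>u. row i E = (\<Sum>b\<in>Bs. u b *s b)"
  proof
    fix i
    have "row i E \<in> vec.span Bs" using Bs(3) by (auto simp: rows_def)
    then show "\<exists>u. row i E = (\<Sum>b\<in>Bs. u b *s b)"
      using vec.span_finite[OF fin] by auto
  qed
  then obtain c where c: "\<And>i. row i E = (\<Sum>b\<in>Bs. c i b *s b)" by metis
  have coef: "(\<Sum>i\<in>UNIV. b$i * c i b') = (if b' = b then 1 else 0)"
    if b: "b \<in> Bs" and b': "b' \<in> Bs" for b b'
  proof -
    obtain j where bj: "b = row j E" using b Bs(1) by (auto simp: rows_def)
    have "b = b v* E" using bj row_vmul[of j E E] idem by simp
    also have "\<dots> = (\<Sum>i\<in>UNIV. b$i *s (\<Sum>b'\<in>Bs. c i b' *s b'))"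
      by (simp add: vmul_rows c)
    also have "\<dots> = (\<Sum>b'\<in>Bs. (\<Sum>i\<in>UNIV. b$i * c i b') *s b')"
      by (simp add: vec.scale_sum_right vec.scale_sum_left vec.scale_scale sum.swap[of _ UNIV Bs])
    finally have e1: "b = (\<Sum>b'\<in>Bs. (\<Sum>i\<in>UNIV. b$i * c i b') *s b')" .
    have e2: "b = (\<Sum>b'\<in>Bs. (if b' = b then 1 else 0) *s b')"
      using b fin by (simp add: if_distrib if_distribR sum.delta' cong: if_cong)
    have z: "(\<Sum>b'\<in>Bs. ((\<Sum>i\<in>UNIV. b$i * c i b') - (if b' = b then 1 else 0)) *s b') = 0"
      using e1 e2 by (simp add: vec.scale_left_diff_distrib sum_subtractf)
    have ind: "\<forall>f. (\<Sum>v\<in>Bs. f v *s v) = 0 \<longrightarrow> (\<forall>v\<in>Bs. f v = 0)"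
      using Bs(2) unfolding vec.independent_explicit by blast
    have "\<forall>v\<in>Bs. ((\<Sum>i\<in>UNIV. b$i * c i v) - (if v = b then 1 else 0)) = 0"
      using ind[rule_format, OF z] by blast
    then show ?thesis using b' by auto
  qed
  have "trace E = (\<Sum>i\<in>UNIV. (row i E) $ i)" by (simp add: trace_def row_def)
  also have "\<dots> = (\<Sum>i\<in>UNIV. \<Sum>b\<in>Bs. c i b * b $ i)" by (simp add: c sum_component)
  also have "\<dots> = (\<Sum>b\<in>Bs. \<Sum>i\<in>UNIV. b $ i * c i b)"
    by (subst sum.swap) (simp add: mult.commute)
  also have "\<dots> = (\<Sum>b\<in>Bs. 1)" using coef by (intro sum.cong) auto
  also have "\<dots> = of_nat (rank E)" using Bs(4) by (simp add: row_rank_def_gen)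
  finally show ?thesis by simp
qed

lemma mm_add_r: "((A::'a::semiring_1^'n^'m) + B) ** C = A ** C + B ** C"
  by (simp add: matrix_matrix_mult_def vec_eq_iff distrib_right sum.distrib)
lemma mm_sub_l: "(A::'a::ring_1^'n^'m) ** (B - C) = A ** B - A ** C"
  by (simp add: matrix_matrix_mult_def vec_eq_iff right_diff_distrib sum_subtractf)
lemma mm_sub_r: "((A::'a::ring_1^'n^'m) - B) ** C = A ** C - B ** C"
  by (simp add: matrix_matrix_mult_def vec_eq_iff left_diff_distrib sum_subtractf)
lemma mm_scale_l: "(c *\<^sub>R (A::'a::real_algebra_1^'n^'m)) ** B = c *\<^sub>R (A ** B)"
  by (simp add: scalar_matrix_assoc)
lemma mm_scale_r: "(A::'a::real_algebra_1^'n^'m) ** (c *\<^sub>R B) = c *\<^sub>R (A ** B)"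
  by (simp add: matrix_scalar_ac scalar_matrix_assoc)

lemma trace_scaleR: "trace (c *\<^sub>R (M::complex^'n^'n)) = of_real c * trace M"
  unfolding trace_def by (simp only: vector_scaleR_component) (simp add: scaleR_conv_of_real sum_distrib_left)

lemma rank_mul_le_right_gen: "rank ((M::'a::field^'n^'m) ** N) \<le> rank N"
proof -
  have "rows (M ** N) \<subseteq> vec.span (rows N)"
  proof
    fix x assume "x \<in> rows (M ** N)"
    then obtain i where x: "x = row i (M ** N)" by (auto simp: rows_def)
    have "x = (\<Sum>j\<in>UNIV. M$i$j *s row j N)"
      by (simp add: x vec_eq_iff row_def matrix_matrix_mult_def sum_component)
    also have "\<dots> \<in> vec.span (rows N)"
      by (intro vec.span_sum vec.span_scale vec.span_base) (auto simp: rows_def)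
    finally show "x \<in> vec.span (rows N)" .
  qed
  then show ?thesis unfolding row_rank_def_gen by (rule vec.dim_mono)
qed

lemma rank_scaleR:
  assumes "c \<noteq> 0" shows "rank (c *\<^sub>R (M::complex^'n^'m)) = rank M"
proof -
  have 1: "c *\<^sub>R M = (c *\<^sub>R mat 1) ** M" by (simp add: mm_scale_l)
  have 2: "M = ((1/c) *\<^sub>R mat 1) ** (c *\<^sub>R M)" using assms by (simp add: mm_scale_l)
  show ?thesis using rank_mul_le_right_gen[of "c *\<^sub>R mat 1" M]
      rank_mul_le_right_gen[of "(1/c) *\<^sub>R mat 1" "c *\<^sub>R M"] 1 2 by simp
qed

lemma rank_eq_0_gen: "rank (M::'a::field^'n^'m) = 0 \<longleftrightarrow> M = 0"
proof
  assume "rank M = 0"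
  then have "rows M \<subseteq> {0}" unfolding row_rank_def_gen by simp
  then have "\<And>i. row i M = 0" by (auto simp: rows_def)
  then show "M = 0" by (simp add: row_def vec_eq_iff)
next
  assume "M = 0"
  then have "rows M \<subseteq> {0}" by (auto simp: rows_def row_def vec_eq_iff)
  then show "rank M = 0" unfolding row_rank_def_gen by simp
qed

lemma idem_l: "A ** A = A \<Longrightarrow> A ** (A ** M) = A ** M"
  by (simp add: matrix_mul_assoc)

lemma gen:
  fixes A B :: "complex^'m^'m" and q :: real
  assumes iA: "A ** A = A" and iB: "B ** B = B"
    and eq: "q *\<^sub>R (A ** B ** A - B ** A ** B) = A - B"
    and q0: "q \<noteq> 0" and q1: "q \<noteq> 1"
  shows "of_nat (rank (q *\<^sub>R (A ** B ** A) - A))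
           = trace A - of_real (q/(q-1)) * (trace A - trace (A ** B))"
    and "of_nat (rank (A - B))
           = of_real (q/(q-1)) * (trace A + trace B - 2 * trace (A ** B))"
proof -
  define s where "s = (q - 1) / q"
  have s0: "s \<noteq> 0" using q0 q1 by (simp add: s_def)
  have is_: "1 / s = q / (q - 1)" by (simp add: s_def)
  note iA' = idem_l[OF iA] and iB' = idem_l[OF iB]
  note as = matrix_mul_assoc[symmetric]
  have eq': "A ** (B ** A) - B ** (A ** B) = (1/q) *\<^sub>R (A - B)"
  proof -
    have "(1/q) *\<^sub>R (q *\<^sub>R (A ** B ** A - B ** A ** B)) = (1/q) *\<^sub>R (A - B)" using eq by simp
    then show ?thesis using q0 by (simp add: as)
  qed
  define D where "D = A - B"
  have D3: "D ** (D ** D) = s *\<^sub>R D"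
  proof -
    have "D ** (D ** D) = D - (A ** (B ** A) - B ** (A ** B))"
      by (simp add: D_def mm_sub_l mm_sub_r matrix_add_ldistrib mm_add_r as iA iB iA' iB' algebra_simps)
    also have "\<dots> = s *\<^sub>R D"
    proof -
      have "s = 1 - 1/q" using q0 by (simp add: s_def field_simps)
      then show ?thesis by (simp add: eq' D_def scaleR_diff_left)
    qed
    finally show ?thesis .
  qed
  define X where "X = A ** (B ** A)"
  have AX: "A ** X = X" and XA: "X ** A = X" by (simp_all add: X_def as iA iA')
  have XX: "X ** X = X - (1/q) *\<^sub>R (A - X)"
  proof -
    have "A ** ((A ** (B ** A) - B ** (A ** B)) ** A) = A ** (((1/q) *\<^sub>R (A - B)) ** A)"
      by (simp only: eq')
    then show ?thesis
      by (simp add: X_def mm_sub_l mm_sub_r mm_scale_l mm_scale_r as iA iA' algebra_simps)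
  qed
  define EA where "EA = (1/s) *\<^sub>R (A - X)"
  have EAEA: "EA ** EA = EA"
  proof -
    have s1: "s = 1 - 1/q" using q0 by (simp add: s_def field_simps)
    have "(A - X) ** (A - X) = (A - X) - (1/q) *\<^sub>R (A - X)"
      by (simp add: mm_sub_l mm_sub_r iA AX XA XX)
    also have "\<dots> = s *\<^sub>R (A - X)" by (simp add: s1 scaleR_diff_left)
    finally have "(A - X) ** (A - X) = s *\<^sub>R (A - X)" .
    then show ?thesis using s0 by (simp add: EA_def mm_scale_l mm_scale_r)
  qed
  define F where "F = A - EA"
  have AEA: "A ** EA = EA" "EA ** A = EA"
    by (simp_all add: EA_def mm_scale_l mm_scale_r mm_sub_l mm_sub_r iA AX XA)
  have FF: "F ** F = F" by (simp add: F_def mm_sub_l mm_sub_r iA AEA EAEA)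
  have qXA: "q *\<^sub>R (A ** B ** A) - A = (q - 1) *\<^sub>R F"
  proof -
    have c: "(q - 1) * (1/s) = q" using q0 q1 by (simp add: s_def)
    have "(q-1) *\<^sub>R F = (q-1) *\<^sub>R A - ((q-1)*(1/s)) *\<^sub>R (A - X)"
      by (simp add: F_def EA_def scaleR_diff_right)
    also have "\<dots> = (q-1) *\<^sub>R A - q *\<^sub>R (A - X)" by (simp only: c)
    also have "\<dots> = q *\<^sub>R X - A" by (simp add: algebra_simps)
    finally show ?thesis by (simp add: X_def as)
  qed
  have trX: "trace X = trace (A ** B)"
    by (simp add: X_def trace_mul_sym[of A "B ** A"] as iA trace_mul_sym[of B A])
  have "of_nat (rank (q *\<^sub>R (A ** B ** A) - A)) = of_nat (rank F)"
    using q1 by (simp add: qXA rank_scaleR)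
  also have "\<dots> = trace F" by (rule rank_idem_trace[OF FF])
  also have "\<dots> = trace A - of_real (q/(q-1)) * (trace A - trace (A ** B))"
    by (simp add: F_def EA_def trace_sub trace_scaleR trX is_)
  finally show "of_nat (rank (q *\<^sub>R (A ** B ** A) - A))
           = trace A - of_real (q/(q-1)) * (trace A - trace (A ** B))" .
  define G where "G = (1/s) *\<^sub>R (D ** D)"
  have GG: "G ** G = G"
  proof -
    have "(D ** D) ** (D ** D) = s *\<^sub>R (D ** D)"
      by (simp add: matrix_mul_assoc[symmetric] D3 mm_scale_r)
    then show ?thesis using s0 by (simp add: G_def mm_scale_l mm_scale_r)
  qed
  have DG: "D ** G = D" using s0 by (simp add: G_def mm_scale_r D3)
  have GD: "G = ((1/s) *\<^sub>R D) ** D" by (simp add: G_def mm_scale_l)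
  have "rank D = rank G"
    using rank_mul_le_right_gen[of "(1/s) *\<^sub>R D" D] rank_mul_le_right_gen[of D G] DG GD
    by simp
  then have "of_nat (rank (A - B)) = trace G" using rank_idem_trace[OF GG] by (simp add: D_def)
  also have "\<dots> = of_real (q/(q-1)) * (trace A + trace B - 2 * trace (A ** B))"
    by (simp add: G_def D_def trace_scaleR is_ mm_sub_l mm_sub_r trace_sub iA iB
        trace_mul_sym[of B A])
  finally show "of_nat (rank (A - B))
           = of_real (q/(q-1)) * (trace A + trace B - 2 * trace (A ** B))" .
qed

lemma sum_pair: "(\<Sum>r\<in>UNIV. (f::'a::finite \<times> 'b::finite \<Rightarrow> 'c::comm_monoid_add) r) = (\<Sum>i\<in>UNIV. \<Sum>j\<in>UNIV. f (i,j))"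
  by (simp add: sum.cartesian_product UNIV_Times_UNIV[symmetric] del: UNIV_Times_UNIV)

lemma kron_mult:
  fixes A C :: "'a::comm_semiring_1^'n^'n" and B D :: "'a^'m^'m"
  shows "kron A B ** kron C D = kron (A ** C) (B ** D)"
proof -
  have "(\<Sum>r\<in>UNIV. A $ fst p $ fst r * B $ snd p $ snd r * (C $ fst r $ fst q * D $ snd r $ snd q))
      = (\<Sum>i\<in>UNIV. A $ fst p $ i * C $ i $ fst q) * (\<Sum>j\<in>UNIV. B $ snd p $ j * D $ j $ snd q)"
    for p q :: "'n \<times> 'm"
    by (simp add: sum_pair sum_product mult_ac) (rule sum.swap)
  then show ?thesis by (simp add: kron_def matrix_matrix_mult_def vec_eq_iff)
qed

definition ra :: "('x \<times> 'y) \<times> 'z \<Rightarrow> 'x \<times> ('y \<times> 'z)" where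
  "ra p = (fst (fst p), snd (fst p), snd p)"

lemma bij_ra: "bij ra"
  by (rule bij_betw_byWitness[where f' = "\<lambda>(x,y,z). ((x,y),z)"]) (auto simp: ra_def)

lemma reassoc_ra: "reassoc M $ p $ q = M $ ra p $ ra q"
  by (simp add: reassoc_def ra_def)

lemma sum_ra: "(\<Sum>r\<in>UNIV. f (ra r)) = (\<Sum>r\<in>UNIV. f r)"
  using sum.reindex_bij_betw[OF bij_ra, of f] by simp

lemma reassoc_mult:
  fixes M N :: "'a::comm_semiring_1^('x::finite \<times> ('y::finite \<times> 'z::finite))^('x \<times> ('y \<times> 'z))"
  shows "reassoc M ** reassoc N = reassoc (M ** N)"
proof -
  have "(\<Sum>r\<in>UNIV. M $ ra p $ ra r * N $ ra r $ ra q) = (\<Sum>r\<in>UNIV. M $ ra p $ r * N $ r $ ra q)" for p q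
    using sum_ra[of "\<lambda>r. M $ ra p $ r * N $ r $ ra q"] by simp
  then show ?thesis by (simp add: vec_eq_iff matrix_matrix_mult_def reassoc_ra)
qed

lemma trace_kron: "trace (kron (A::'a::comm_semiring_1^'n^'n) (B::'a^'m^'m)) = trace A * trace B"
  by (simp add: trace_def kron_def sum_pair sum_product)

lemma trace_reassoc:
  fixes M :: "'a::comm_semiring_1^('x::finite \<times> ('y::finite \<times> 'z::finite))^('x \<times> ('y \<times> 'z))"
  shows "trace (reassoc M) = trace M"
  using sum_ra[of "\<lambda>r. M $ r $ r"] by (simp add: trace_def reassoc_ra)

lemma adj_entry: "adjoint_mat M = M \<Longrightarrow> M $ i $ j = cnj (M $ j $ i)"
proof -
  assume "adjoint_mat M = M"
  then have "M $ i $ j = adjoint_mat M $ i $ j" by simp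
  also have "\<dots> = cnj (M $ j $ i)" by (simp add: adjoint_mat_def)
  finally show ?thesis .
qed

lemma adj_mult: "adjoint_mat ((M::complex^'n^'n) ** N) = adjoint_mat N ** adjoint_mat M"
  by (simp add: adjoint_mat_def matrix_matrix_mult_def vec_eq_iff mult.commute)

lemma adj_sub: "adjoint_mat ((M::complex^'n^'n) - N) = adjoint_mat M - adjoint_mat N"
  by (simp add: adjoint_mat_def vec_eq_iff)

lemma herm_sq_zero:
  fixes H :: "complex^'n^'n"
  assumes h: "adjoint_mat H = H" and z: "H ** H = 0"
  shows "H = 0"
proof -
  have "H $ i $ j = 0" for i j
  proof -
    have "(H ** H) $ i $ i = 0" using z by simp
    then have "(\<Sum>k\<in>UNIV. H $ i $ k * H $ k $ i) = 0"
      by (simp add: matrix_matrix_mult_def)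
    moreover have "H $ i $ k * H $ k $ i = complex_of_real ((cmod (H $ i $ k))^2)" for k
      using adj_entry[OF h, of k i] complex_norm_square[of "H $ i $ k"] by simp
    ultimately have "complex_of_real (\<Sum>k\<in>UNIV. (cmod (H $ i $ k))^2) = 0"
      by (simp add: of_real_sum)
    then have "(\<Sum>k\<in>UNIV. (cmod (H $ i $ k))^2) = 0"
      by (simp only: of_real_eq_0_iff)
    then have "\<forall>k\<in>UNIV. (cmod (H $ i $ k))^2 = 0"
      by (subst (asm) sum_nonneg_eq_0_iff) auto
    then show ?thesis by simp
  qed
  then show ?thesis by (simp add: vec_eq_iff)
qed

lemma herm_cube_zero:
  fixes D :: "complex^'n^'n"
  assumes h: "adjoint_mat D = D" and z: "D ** (D ** D) = 0"
  shows "D = 0"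
proof -
  have h2: "adjoint_mat (D ** D) = D ** D" by (simp add: adj_mult h)
  have "(D ** D) ** (D ** D) = 0" by (simp add: matrix_mul_assoc[symmetric] z)
  then have "D ** D = 0" using herm_sq_zero[OF h2] by simp
  then show ?thesis using herm_sq_zero[OF h] by simp
qed

lemma D3_lemma:
  fixes A B :: "complex^'m^'m"
  assumes iA: "A ** A = A" and iB: "B ** B = B"
  shows "(A - B) ** ((A - B) ** (A - B)) = (A - B) - (A ** (B ** A) - B ** (A ** B))"
  by (simp add: idem_l[OF iA] idem_l[OF iB] mm_sub_l mm_sub_r matrix_add_ldistrib mm_add_r matrix_mul_assoc[symmetric] iA iB algebra_simps)

lemma scalar_case:
  fixes P :: "complex^('n::finite \<times> 'n)^('n \<times> 'n)"
  assumes idem: "P ** P = P"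
    and eq: "kron P (mat 1 :: complex^'n^'n) = reassoc (kron (mat 1 :: complex^'n^'n) P)"
  shows "P = 0 \<or> P = mat 1"
proof -
  have e: "P $ (x,y) $ (x',y') * (if z = z' then 1 else 0)
         = (if x = x' then 1 else 0) * P $ (y,z) $ (y',z')" for x y x' y' z z'
  proof -
    have 1: "kron P (mat 1 :: complex^'n^'n) $ ((x,y),z) $ ((x',y'),z')
        = P $ (x,y) $ (x',y') * (if z = z' then 1 else 0)"
      by (simp add: kron_def mat_def)
    have 2: "reassoc (kron (mat 1 :: complex^'n^'n) P) $ ((x,y),z) $ ((x',y'),z')
        = (if x = x' then 1 else 0) * P $ (y,z) $ (y',z')"
      by (simp add: kron_def reassoc_def mat_def)
    have 3: "kron P (mat 1 :: complex^'n^'n) $ ((x,y),z) $ ((x',y'),z')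
        = reassoc (kron (mat 1 :: complex^'n^'n) P) $ ((x,y),z) $ ((x',y'),z')"
      by (simp only: eq)
    show ?thesis using 3 unfolding 1 2 .
  qed
  obtain x0 :: 'n where True by simp
  define c where "c = P $ (x0,x0) $ (x0,x0)"
  have off: "P $ a $ b = 0" if "a \<noteq> b" for a b
  proof -
    obtain x y x' y' where ab: "a = (x,y)" "b = (x',y')" by (cases a, cases b) auto
    show ?thesis
    proof (cases "x = x'")
      case False
      then show ?thesis using e[of x y x' y' x0 x0] ab by simp
    next
      case True
      then have "y \<noteq> y'" using that ab by simp
      then show ?thesis using e[of x0 x x0 x y y'] ab True by simp
    qed
  qed
  have diag: "P $ a $ a = c" for a
  proof -
    obtain x y where a: "a = (x,y)" by (cases a) auto
    have "P $ (x,y) $ (x,y) = P $ (y,x0) $ (y,x0)" using e[of x y x y x0 x0] by simp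
    also have "\<dots> = c" using e[of y x0 y x0 x0 x0] by (simp add: c_def)
    finally show ?thesis by (simp add: a)
  qed
  have "(P ** P) $ (x0,x0) $ (x0,x0) = (\<Sum>k\<in>UNIV. P $ (x0,x0) $ k * P $ k $ (x0,x0))"
    by (simp add: matrix_matrix_mult_def)
  also have "\<dots> = (\<Sum>k\<in>UNIV. if k = (x0,x0) then c * c else 0)"
    by (rule sum.cong) (auto simp: off diag)
  also have "\<dots> = c * c" by simp
  finally have "c * c = c * 1" using idem diag by simp
  then have c01: "c = 0 \<or> c = 1" using mult_cancel_left[of c c 1] by simp
  show ?thesis
  proof (cases "c = 0")
    case True
    then have "P = 0" using off diag by (simp add: vec_eq_iff) metis
    then show ?thesis by simp
  next
    case False
    then have "c = 1" using c01 by simp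
    then have "P = mat 1" using off diag by (simp add: vec_eq_iff mat_def)
    then show ?thesis by simp
  qed
qed

lemma aux: "real m = a - k \<Longrightarrow> (m = 0) = (k = a)" for m :: nat
  by auto

theorem proposition4:
  fixes P :: "complex^('n::finite \<times> 'n)^('n \<times> 'n)"
    and P1 P2 :: "complex^(('n \<times> 'n) \<times> 'n)^(('n \<times> 'n) \<times> 'n)"
    and Q k :: real and r :: nat
  assumes n2: "CARD('n) \<ge> 2"
    and Qpos: "Q > 0"
    and herm: "adjoint_mat P = P"
    and idem: "P ** P = P"
    and P1_def: "P1 = kron P (mat 1 :: complex^'n^'n)"
    and P2_def: "P2 = reassoc (kron (mat 1 :: complex^'n^'n) P)"
    and eqn: "Q^2 *\<^sub>R (P1 ** P2 ** P1 - P2 ** P1 ** P2) = P1 - P2"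
    and nontriv: "P \<noteq> 0" "P \<noteq> mat 1"
    and r_def: "r = rank P"
    and k_def: "k = real (rank (P1 - P2)) / 2"
  shows "real (rank (Q^2 *\<^sub>R (P1 ** P2 ** P1) - P1)) = real r * real CARD('n) - k
       \<and> real (rank (Q^2 *\<^sub>R (P2 ** P1 ** P2) - P2)) = real r * real CARD('n) - k
       \<and> ((Q^2 *\<^sub>R (P1 ** P2 ** P1) = P1 \<and> Q^2 *\<^sub>R (P2 ** P1 ** P2) = P2)
            \<longleftrightarrow> k = real r * real CARD('n))"
proof -
  have iA: "P1 ** P1 = P1" by (simp add: P1_def kron_mult idem)
  have iB: "P2 ** P2 = P2" by (simp add: P2_def reassoc_mult kron_mult idem)
  have q0: "Q^2 \<noteq> 0" using Qpos by simp
  have hc: "cnj (P $ i $ j) = P $ j $ i" for i j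
    using adj_entry[OF herm, of j i] by simp
  have hA: "adjoint_mat P1 = P1"
    by (simp add: P1_def adjoint_mat_def kron_def mat_def vec_eq_iff hc)
  have hB: "adjoint_mat P2 = P2"
    by (simp add: P2_def adjoint_mat_def reassoc_def kron_def mat_def vec_eq_iff hc)
  have hD: "adjoint_mat (P1 - P2) = P1 - P2" by (simp add: adj_sub hA hB)
  have q1: "Q^2 \<noteq> 1"
  proof
    assume "Q^2 = 1"
    then have e1: "P1 ** P2 ** P1 - P2 ** P1 ** P2 = P1 - P2" using eqn by simp
    have "(P1 - P2) ** ((P1 - P2) ** (P1 - P2)) = 0"
      using D3_lemma[OF iA iB] e1 by (simp add: matrix_mul_assoc)
    then have "P1 - P2 = 0" using herm_cube_zero[OF hD] by simp
    then have "P1 = P2" by simp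
    then have "P = 0 \<or> P = mat 1" using scalar_case[OF idem] by (simp add: P1_def P2_def)
    then show False using nontriv by simp
  qed
  have eqB: "Q^2 *\<^sub>R (P2 ** P1 ** P2 - P1 ** P2 ** P1) = P2 - P1"
  proof -
    have "Q^2 *\<^sub>R (P2 ** P1 ** P2 - P1 ** P2 ** P1) = - (Q^2 *\<^sub>R (P1 ** P2 ** P1 - P2 ** P1 ** P2))"
      by (simp add: scaleR_diff_right)
    then show ?thesis using eqn by simp
  qed
  have tP: "trace P = of_nat r" using rank_idem_trace[OF idem] r_def by simp
  define T :: complex where "T = of_nat r * of_nat CARD('n)"
  have trA: "trace P1 = T" by (simp add: P1_def trace_kron trace_I tP T_def)
  have trB: "trace P2 = T" by (simp add: P2_def trace_reassoc trace_kron trace_I tP T_def mult.commute)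
  define c :: complex where "c = of_real (Q^2 / (Q^2 - 1))"
  define t where "t = trace (P1 ** P2)"
  have tBA: "trace (P2 ** P1) = t" using trace_mul_sym[of P2 P1] by (simp add: t_def)
  have g1: "of_nat (rank (Q^2 *\<^sub>R (P1 ** P2 ** P1) - P1)) = T - c * (T - t)"
    using gen(1)[OF iA iB eqn q0 q1] by (simp add: trA c_def t_def)
  have g2: "of_nat (rank (Q^2 *\<^sub>R (P2 ** P1 ** P2) - P2)) = T - c * (T - t)"
    using gen(1)[OF iB iA eqB q0 q1] by (simp add: trB c_def tBA)
  have g3: "of_nat (rank (P1 - P2)) = c * (T + T - 2 * t)"
    using gen(2)[OF iA iB eqn q0 q1] by (simp add: trA trB c_def t_def)
  have kc: "complex_of_real k = c * (T - t)"
  proof -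
    have "complex_of_real k = of_nat (rank (P1 - P2)) / 2" by (simp add: k_def)
    also have "\<dots> = c * (T - t)" by (simp only: g3) (simp add: field_simps)
    finally show ?thesis .
  qed
  have Tr: "T = complex_of_real (real r * real CARD('n))" by (simp add: T_def)
  have R1: "real (rank (Q^2 *\<^sub>R (P1 ** P2 ** P1) - P1)) = real r * real CARD('n) - k"
  proof -
    have "complex_of_real (real (rank (Q^2 *\<^sub>R (P1 ** P2 ** P1) - P1)))
        = complex_of_real (real r * real CARD('n) - k)"
      using g1 kc Tr by simp
    then show ?thesis by (simp only: of_real_eq_iff)
  qed
  have R2: "real (rank (Q^2 *\<^sub>R (P2 ** P1 ** P2) - P2)) = real r * real CARD('n) - k"
  proof -
    have "complex_of_real (real (rank (Q^2 *\<^sub>R (P2 ** P1 ** P2) - P2)))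
        = complex_of_real (real r * real CARD('n) - k)"
      using g2 kc Tr by simp
    then show ?thesis by (simp only: of_real_eq_iff)
  qed
  have z1: "Q^2 *\<^sub>R (P1 ** P2 ** P1) = P1 \<longleftrightarrow> rank (Q^2 *\<^sub>R (P1 ** P2 ** P1) - P1) = 0"
    by (simp add: rank_eq_0_gen)
  have z2: "Q^2 *\<^sub>R (P2 ** P1 ** P2) = P2 \<longleftrightarrow> rank (Q^2 *\<^sub>R (P2 ** P1 ** P2) - P2) = 0"
    by (simp add: rank_eq_0_gen)
  have iff: "(Q^2 *\<^sub>R (P1 ** P2 ** P1) = P1 \<and> Q^2 *\<^sub>R (P2 ** P1 ** P2) = P2)
            \<longleftrightarrow> k = real r * real CARD('n)"
  proof -
    have a: "rank (Q^2 *\<^sub>R (P1 ** P2 ** P1) - P1) = 0 \<longleftrightarrow> k = real r * real CARD('n)"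
      using R1 by (rule aux)
    have b: "rank (Q^2 *\<^sub>R (P2 ** P1 ** P2) - P2) = 0 \<longleftrightarrow> k = real r * real CARD('n)"
      using R2 by (rule aux)
    show ?thesis using z1 z2 a b by blast
  qed
  show ?thesis using R1 R2 iff by blast
qed

end
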